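(* Let $|p|<1$ and let $a,b,q,r$ be nonzero complex numbers such that all expressions below are well defined. For integers $n\ge j$ and $j\ge m$ define $$a_{nj}=\frac{(-1)^{n+j}\,\theta(ar^jq^j,\,br^jq^{-j};p)\,(arq^n,\,brq^{-n};r,p)_{n-1}}{(q;q,p)_{n-j}\,(arq^n,\,brq^{-n};r,p)_j\,(bq^{1-2n}/a;q,p)_{n-j}},$$ $$b_{jm}=\frac{(ar^mq^m,\,br^mq^{-m};r,p)_{j-m}}{(q,\,aq^{1+2m}/b;q,p)_{j-m}}\Big(-\frac abq^{1+2m}\Big)^{j-m}q^{2\binom{j-m}{2}}.$$ Then for all integers $m\le n$, $$\sum_{j=m}^n a_{nj}b_{jm}=\delta_{n,m}.$$
   Context: For $|p|<1$ and $x\neq 0$, $\theta(x;p)=(x;p)_\infty(p/x;p)_\infty$ where $(x;p)_\infty=\prod_{k\ge 0}(1-xp^k)$, and $\theta(x_1,\dots,x_m;p)=\prod_{i=1}^m\theta(x_i;p)$. For $a\ne0$ and an integer $n$: $(a;q,p)_n=\prod_{k=0}^{n-1}\theta(aq^k;p)$ for $n\ge1$, $(a;q,p)_0=1$, $(a;q,p)_n=1/\prod_{k=0}^{-n-1}\theta(aq^{n+k};p)$ for $n\le-1$; $(a_1,\dots,a_m;q,p)_n=\prod_i(a_i;q,p)_n$. $\delta_{n,m}$ is the Kronecker delta. *)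

theory Defs
  imports "HOL-Analysis.Analysis"
begin

definition qpoch_inf :: "complex \<Rightarrow> complex \<Rightarrow> complex" where
  "qpoch_inf x p = prodinf (\<lambda>k. 1 - x * p ^ k)"

definition theta :: "complex \<Rightarrow> complex \<Rightarrow> complex" where
  "theta x p = qpoch_inf x p * qpoch_inf (p / x) p"

definition epoch :: "complex \<Rightarrow> complex \<Rightarrow> complex \<Rightarrow> int \<Rightarrow> complex" where
  "epoch a q p n =
     (if n \<ge> 0 then (\<Prod>k<nat n. theta (a * q ^ k) p)
      else 1 / (\<Prod>k<nat (- n). theta (a * q powi (n + int k)) p))"

text \<open>(a;q,p)_n is well defined (for n < 0 the reciprocal must not be 1/0).\<close>
definition epoch_defined :: "complex \<Rightarrow> complex \<Rightarrow> complex \<Rightarrow> int \<Rightarrow> bool" where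
  "epoch_defined a q p n \<longleftrightarrow>
     (n < 0 \<longrightarrow> (\<Prod>k<nat (- n). theta (a * q powi (n + int k)) p) \<noteq> 0)"

definition coeffA :: "complex \<Rightarrow> complex \<Rightarrow> complex \<Rightarrow> complex \<Rightarrow> complex \<Rightarrow> int \<Rightarrow> int \<Rightarrow> complex" where
  "coeffA a b q r p n j =
     (-1) powi (n + j) * theta (a * r powi j * q powi j) p * theta (b * r powi j * q powi (- j)) p
       * epoch (a * r * q powi n) r p (n - 1) * epoch (b * r * q powi (- n)) r p (n - 1)
     / (epoch q q p (n - j) * epoch (a * r * q powi n) r p j * epoch (b * r * q powi (- n)) r p j
        * epoch (b * q powi (1 - 2 * n) / a) q p (n - j))"

definition coeffB :: "complex \<Rightarrow> complex \<Rightarrow> complex \<Rightarrow> complex \<Rightarrow> complex \<Rightarrow> int \<Rightarrow> int \<Rightarrow> complex" where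
  "coeffB a b q r p j m =
     epoch (a * r powi m * q powi m) r p (j - m) * epoch (b * r powi m * q powi (- m)) r p (j - m)
     / (epoch q q p (j - m) * epoch (a * q powi (1 + 2 * m) / b) q p (j - m))
     * (- (a / b) * q powi (1 + 2 * m)) ^ nat (j - m)
     * q ^ (2 * (nat (j - m) choose 2))"

end

theory Submission
  imports Defs "HOL-Complex_Analysis.Complex_Analysis"
begin
lemma qinf_has_prod:
  assumes "norm p < 1"
  shows "(\<lambda>k. 1 - x * p ^ k) has_prod qpoch_inf x p"
proof -
  have "summable (\<lambda>k. norm x * norm p ^ k)"
    using assms by (intro summable_mult summable_geometric) auto
  hence "abs_convergent_prod (\<lambda>k. 1 - x * p ^ k)"
    unfolding abs_convergent_prod_conv_summable by (simp add: norm_mult norm_power)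
  hence "convergent_prod (\<lambda>k. 1 - x * p ^ k)"
    by (rule abs_convergent_prod_imp_convergent_prod)
  thus ?thesis unfolding qpoch_inf_def by (rule convergent_prod_has_prod)
qed

lemma qinf_shift:
  assumes "norm p < 1"
  shows "qpoch_inf x p = (1 - x) * qpoch_inf (x * p) p"
proof (cases "x = 1")
  case True
  have "qpoch_inf x p = 0"
    using has_prod_eq_0_iff[OF qinf_has_prod[OF assms, of x]] True
    by (metis (no_types, lifting) diff_self mult_1 power_0 rangeI)
  thus ?thesis using True by simp
next
  case False
  have "(\<lambda>n. 1 - x * p ^ Suc n) has_prod qpoch_inf (x * p) p"
    using qinf_has_prod[OF assms, of "x*p"] by (simp add: mult_ac)
  hence "(\<lambda>k. 1 - x * p ^ k) has_prod (qpoch_inf (x * p) p * (1 - x * p ^ 0))"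
    using has_prod_Suc_iff[of "\<lambda>k. 1 - x * p ^ k"] False by simp
  thus ?thesis using has_prod_unique2[OF qinf_has_prod[OF assms, of x]] by (simp add: mult_ac)
qed

lemma qinf_zero_iff:
  assumes "norm p < 1"
  shows "qpoch_inf x p = 0 \<longleftrightarrow> (\<exists>k. x * p ^ k = 1)"
  using has_prod_eq_0_iff[OF qinf_has_prod[OF assms, of x]]
  by (auto simp: eq_commute[of 0] eq_commute[of 1] )

lemma qinf_holo:
  assumes "norm p < 1" "p \<noteq> 0"
  shows "(\<lambda>x. qpoch_inf x p) holomorphic_on A"
proof -
  interpret W: weierstrass_product "\<lambda>n. inverse (p ^ n)" "\<lambda>_. 0"
  proof
    show "\<And>n. inverse (p ^ n) \<noteq> 0" using assms by simp
    have "filterlim (\<lambda>n. (inverse p) ^ n) at_infinity sequentially"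
      using assms by (intro filterlim_realpow_sequentially_gt1) (simp add: norm_inverse one_less_inverse)
    thus "filterlim (\<lambda>n. inverse (p ^ n)) at_infinity sequentially"
      by (simp add: power_inverse)
    fix r :: real assume "r > 0"
    have "summable (\<lambda>n. r * norm p ^ n)"
      using assms by (intro summable_mult summable_geometric) auto
    thus "summable (\<lambda>n. (r / norm (inverse (p ^ n))) ^ Suc 0)"
      by (simp add: norm_inverse norm_power divide_inverse)
  qed
  have eq: "W.f x = qpoch_inf x p" for x
    unfolding W.f_def qpoch_inf_def weierstrass_factor_def by (simp add: divide_inverse)
  show ?thesis using W.holomorphic[of A] by (simp add: eq[abs_def])
qed


lemma qinf_comp_holo:
  assumes "norm p < 1" "p \<noteq> 0" "g holomorphic_on A"
  shows "(\<lambda>x. qpoch_inf (g x) p) holomorphic_on A"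
proof -
  have "((\<lambda>x. qpoch_inf x p) \<circ> g) holomorphic_on A"
    by (rule holomorphic_on_compose[OF assms(3) qinf_holo[OF assms(1,2)]])
  thus ?thesis by (simp add: o_def)
qed

lemma theta_holo:
  assumes "norm p < 1" "p \<noteq> 0" "g holomorphic_on A" "\<And>x. x \<in> A \<Longrightarrow> g x \<noteq> 0"
  shows "(\<lambda>x. theta (g x) p) holomorphic_on A"
proof -
  have "(\<lambda>x. p / g x) holomorphic_on A"
    using assms by (intro holomorphic_intros) auto
  thus ?thesis unfolding theta_def
    by (intro holomorphic_on_mult qinf_comp_holo assms)
qed

lemma theta_factor:
  assumes "norm p < 1"
  shows "theta w p = (1 - w) * (qpoch_inf (w * p) p * qpoch_inf (p / w) p)"
  unfolding theta_def using qinf_shift[OF assms, of w] by simp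

lemma theta_inv:
  assumes "norm p < 1" "x \<noteq> 0"
  shows "theta (1 / x) p = - (1 / x) * theta x p"
proof -
  have "theta (1 / x) p = (1 - 1 / x) * qpoch_inf (p / x) p * qpoch_inf (x * p) p"
    unfolding theta_def using qinf_shift[OF assms(1), of "1/x"] assms(2)
    by (simp add: mult_ac)
  also have "\<dots> = - (1 / x) * ((1 - x) * (qpoch_inf (x * p) p * qpoch_inf (p / x) p))"
    using assms(2) by (simp add: field_simps)
  finally show ?thesis using theta_factor[OF assms(1), of x] by simp
qed

lemma theta_p:
  assumes "norm p < 1" "p \<noteq> 0" "x \<noteq> 0"
  shows "theta (p * x) p = - (1 / x) * theta x p"
proof -
  have "theta (p * x) p = qpoch_inf (x * p) p * ((1 - 1 / x) * qpoch_inf (p / x) p)"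
    unfolding theta_def using qinf_shift[OF assms(1), of "1/x"] assms
    by (simp add: mult_ac)
  also have "\<dots> = - (1 / x) * ((1 - x) * (qpoch_inf (x * p) p * qpoch_inf (p / x) p))"
    using assms by (simp add: field_simps)
  finally show ?thesis using theta_factor[OF assms(1), of x] by simp
qed

lemma theta_powi:
  assumes "norm p < 1" "p \<noteq> 0"
  shows "\<exists>c m. c \<noteq> 0 \<and> (\<forall>x. x \<noteq> 0 \<longrightarrow> theta (p powi k * x) p = c * x powi m * theta x p)"
proof (induction k rule: int_induct[where k = 0])
  case base
  show ?case by (rule exI[of _ 1], rule exI[of _ 0]) simp
next
  case (step1 i)
  then obtain c m where cm: "c \<noteq> 0" "\<And>x. x \<noteq> 0 \<Longrightarrow> theta (p powi i * x) p = c * x powi m * theta x p"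
    by blast
  have "theta (p powi (i + 1) * x) p = (- c / p powi i) * x powi (m - 1) * theta x p" if "x \<noteq> 0" for x
  proof -
    have "theta (p powi (i + 1) * x) p = theta (p * (p powi i * x)) p"
      using assms by (simp add: power_int_add mult_ac)
    also have "\<dots> = - (1 / (p powi i * x)) * theta (p powi i * x) p"
      using assms that by (intro theta_p) auto
    also have "\<dots> = (- c / p powi i) * x powi (m - 1) * theta x p"
      using cm(2)[OF that] that assms by (simp add: power_int_diff field_simps)
    finally show ?thesis .
  qed
  moreover have "- c / p powi i \<noteq> 0" using cm assms by simp
  ultimately show ?case by blast
next
  case (step2 i)
  then obtain c m where cm: "c \<noteq> 0" "\<And>x. x \<noteq> 0 \<Longrightarrow> theta (p powi i * x) p = c * x powi m * theta x p"
    by blast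
  have "theta (p powi (i - 1) * x) p = (- c * p powi (i - 1)) * x powi (m + 1) * theta x p" if "x \<noteq> 0" for x
  proof -
    have "theta (p powi i * x) p = theta (p * (p powi (i - 1) * x)) p"
      using assms by (simp add: power_int_diff mult_ac)
    also have "\<dots> = - (1 / (p powi (i - 1) * x)) * theta (p powi (i - 1) * x) p"
      using assms that by (intro theta_p) auto
    finally have "theta (p powi (i - 1) * x) p = - (p powi (i - 1) * x) * theta (p powi i * x) p"
      using assms that by (simp add: field_simps)
    also have "\<dots> = (- c * p powi (i - 1)) * x powi (m + 1) * theta x p"
      using cm(2)[OF that] that assms by (simp add: power_int_add field_simps)
    finally show ?thesis .
  qed
  moreover have "- c * p powi (i - 1) \<noteq> 0" using cm assms by simp
  ultimately show ?case by blast
qed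

lemma theta_nonzero:
  assumes "norm p < 1" "w \<noteq> 0" "\<And>k::int. w \<noteq> p powi k"
  shows "theta w p \<noteq> 0"
proof
  assume "theta w p = 0"
  hence "qpoch_inf w p = 0 \<or> qpoch_inf (p / w) p = 0" unfolding theta_def by simp
  thus False
  proof
    assume "qpoch_inf w p = 0"
    then obtain k where k: "w * p ^ k = 1" using qinf_zero_iff[OF assms(1)] by auto
    hence "p \<noteq> 0 \<or> k = 0" by (cases k) auto
    hence "w = p powi (- int k)" using k by (auto simp: power_int_minus field_simps)
    thus False using assms(3) by blast
  next
    assume "qpoch_inf (p / w) p = 0"
    then obtain k where k: "p / w * p ^ k = 1" using qinf_zero_iff[OF assms(1)] by auto
    hence "w = p powi (int k + 1)" using assms(2)
      by (auto simp: power_int_add field_simps)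
    thus False using assms(3) by blast
  qed
qed

lemma theta_one: "norm p < 1 \<Longrightarrow> theta 1 p = 0"
  using theta_factor[of p 1] by simp

lemma qinf_pp_nonzero:
  assumes "norm p < 1"
  shows "qpoch_inf p p \<noteq> 0"
proof
  assume "qpoch_inf p p = 0"
  then obtain k where k: "p * p ^ k = 1" using qinf_zero_iff[OF assms(1)] by auto
  have "norm p ^ k \<le> 1" using assms by (simp add: power_le_one)
  hence "norm p * norm p ^ k \<le> norm p" by (simp add: mult_left_le)
  hence "norm (p * p ^ k) < 1" using assms by (simp add: norm_mult norm_power)
  thus False using k by simp
qed

lemma periodic_powi:
  fixes p x :: complex
  assumes "p \<noteq> 0" "\<And>x. x \<noteq> 0 \<Longrightarrow> h (p * x) = h x" "x \<noteq> 0"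
  shows "h (p powi k * x) = h x"
proof (induction k rule: int_induct[where k = 0])
  case base thus ?case by simp
next
  case (step1 i)
  have "h (p powi (i + 1) * x) = h (p * (p powi i * x))"
    using assms by (simp add: power_int_add mult_ac)
  also have "\<dots> = h (p powi i * x)" using assms by (intro assms(2)) auto
  finally show ?case using step1 by simp
next
  case (step2 i)
  have "h (p powi i * x) = h (p * (p powi (i - 1) * x))"
    using assms by (simp add: power_int_diff mult_ac)
  also have "\<dots> = h (p powi (i - 1) * x)" using assms by (intro assms(2)) auto
  finally show ?case using step2 by simp
qed

lemma annulus_reach:
  fixes p x :: complex
  assumes "0 < norm p" "norm p < 1" "x \<noteq> 0"
  shows "\<exists>k::int. norm p \<le> norm (p powi k * x) \<and> norm (p powi k * x) \<le> 1"
proof -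
  define L where "L = ln (norm p)"
  define X where "X = ln (norm x)"
  have L: "L < 0" using assms unfolding L_def by simp
  define k where "k = ceiling (- X / L)"
  have k1: "real_of_int k \<ge> - X / L" unfolding k_def by simp
  have k2: "real_of_int k < - X / L + 1" unfolding k_def by linarith
  have "real_of_int k * L \<le> (- X / L) * L" using k1 L by (intro mult_right_mono_neg) auto
  hence a: "real_of_int k * L \<le> - X" using L by simp
  have b: "real_of_int k * L > (- X / L + 1) * L" using k2 L by (simp add: mult_strict_right_mono_neg)
  have b': "(- X / L + 1) * L = - X + L" using L by (simp add: field_simps)
  have nrm: "norm (p powi k * x) = exp (real_of_int k * L + X)"
  proof -
    have "norm (p powi k * x) = norm p powi k * norm x" by (simp add: norm_mult norm_power_int)
    also have "norm p powi k = norm p powr real_of_int k" using assms by (simp add: powr_real_of_int')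
    also have "\<dots> = exp (real_of_int k * L)" using assms by (simp add: powr_def L_def)
    also have "norm x = exp X" using assms by (simp add: X_def)
    finally show ?thesis by (simp add: exp_add)
  qed
  have "exp (real_of_int k * L + X) \<le> 1" using a by simp
  moreover have "exp (real_of_int k * L + X) \<ge> norm p"
  proof -
    have "norm p = exp L" using assms by (simp add: L_def)
    also have "exp L \<le> exp (real_of_int k * L + X)" using b b' by simp
    finally show ?thesis .
  qed
  ultimately show ?thesis using nrm by (intro exI[of _ k]) auto
qed

lemma periodic_const:
  assumes "0 < norm p" "norm p < 1" "h holomorphic_on (-{0})"
    and per: "\<And>x. x \<noteq> 0 \<Longrightarrow> h (p * x) = h x" and "x \<noteq> 0"
  shows "h x = h 1"
proof -
  define A where "A = {z::complex. norm p \<le> norm z \<and> norm z \<le> 1}"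
  have "closed A" unfolding A_def
    by (intro closed_Collect_conj closed_Collect_le continuous_intros)
  moreover have "bounded A" unfolding A_def bounded_iff by auto
  ultimately have "compact A" by (simp add: compact_eq_bounded_closed)
  moreover have "A \<subseteq> -{0}" using assms unfolding A_def by auto
  hence "continuous_on A h"
    using assms(3) holomorphic_on_imp_continuous_on holomorphic_on_subset by blast
  ultimately have "compact (h ` A)" by (metis compact_continuous_image)
  then obtain M where M: "\<And>z. z \<in> A \<Longrightarrow> norm (h z) \<le> M"
    using compact_imp_bounded bounded_iff by (metis image_eqI)
  define g where "g = (\<lambda>z. h (exp z))"
  have "g holomorphic_on UNIV"
  proof -
    have "(h \<circ> exp) holomorphic_on UNIV"
      by (rule holomorphic_on_compose) (auto intro!: holomorphic_intros holomorphic_on_subset[OF assms(3)])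
    thus ?thesis by (simp add: g_def o_def)
  qed
  moreover have "bounded (range g)"
  proof -
    have "norm (g z) \<le> M" for z
    proof -
      obtain k where "p powi k * exp z \<in> A"
        using annulus_reach[OF assms(1,2), of "exp z"] unfolding A_def by auto
      hence "norm (h (p powi k * exp z)) \<le> M" by (rule M)
      moreover have "h (p powi k * exp z) = h (exp z)"
        using assms by (intro periodic_powi[where h=h and p=p]) (auto simp: per)
      ultimately show ?thesis by (simp add: g_def)
    qed
    thus ?thesis unfolding bounded_iff by auto
  qed
  ultimately have "g constant_on UNIV" by (rule Liouville_theorem)
  hence "g (Ln x) = g 0" unfolding constant_on_def by auto
  thus ?thesis using assms by (simp add: g_def)
qed

lemma cont_at_of_holo:
  assumes "f holomorphic_on S" "open S" "x \<in> S"
  shows "continuous (at x) f"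
  using assms holomorphic_on_imp_continuous_on continuous_on_eq_continuous_at by blast

lemma local_removable:
  assumes S: "open S" "x0 \<in> S" and hol: "F holomorphic_on S" "G holomorphic_on S" "K holomorphic_on S"
    and F0: "F x0 = 0" and K0: "K x0 \<noteq> 0" and GK: "\<And>x. x \<in> S \<Longrightarrow> G x = (x - x0) * K x"
  shows "\<exists>e>0. (\<lambda>x. if G x \<noteq> 0 then F x / G x else deriv F x / deriv G x) holomorphic_on ball x0 e"
proof -
  have "continuous (at x0) K" by (rule cont_at_of_holo[OF hol(3) S(1,2)])
  then obtain e1 where e1: "e1 > 0" "\<And>y. dist x0 y < e1 \<Longrightarrow> K y \<noteq> 0"
    using continuous_at_avoid[of x0 K 0] K0 by auto
  obtain e2 where e2: "e2 > 0" "ball x0 e2 \<subseteq> S" using S open_contains_ball by blast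
  define e where "e = min e1 e2"
  have e: "e > 0" "ball x0 e \<subseteq> S" "\<And>y. y \<in> ball x0 e \<Longrightarrow> K y \<noteq> 0"
    using e1 e2 by (auto simp: e_def)
  define F1 where "F1 = (\<lambda>z. if z = x0 then deriv F x0 else (F z - F x0) / (z - x0))"
  have F1h: "F1 holomorphic_on S" unfolding F1_def
    by (rule pole_lemma[OF hol(1)]) (simp add: S interior_open)
  have dG: "deriv G x0 = K x0"
  proof -
    have "K field_differentiable at x0"
      using hol(3) S holomorphic_on_imp_differentiable_at by blast
    then obtain k' where "(K has_field_derivative k') (at x0)"
      using field_differentiable_def by blast
    hence "((\<lambda>x. (x - x0) * K x) has_field_derivative (1 * K x0 + (x0 - x0) * k')) (at x0)"
      by (intro derivative_eq_intros) auto
    hence "(G has_field_derivative K x0) (at x0)"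
      using has_field_derivative_transform_within_open[OF _ S(1,2), of "\<lambda>x. (x - x0) * K x" _ G] GK
      by simp
    thus ?thesis by (rule DERIV_imp_deriv)
  qed
  have "(\<lambda>x. F1 x / K x) holomorphic_on ball x0 e"
    using e by (intro holomorphic_on_divide holomorphic_on_subset[OF F1h] holomorphic_on_subset[OF hol(3)]) auto
  moreover have "F1 x / K x = (if G x \<noteq> 0 then F x / G x else deriv F x / deriv G x)" if "x \<in> ball x0 e" for x
  proof (cases "x = x0")
    case True
    thus ?thesis using GK[OF S(2)] dG by (simp add: F1_def)
  next
    case False
    have "G x \<noteq> 0" using GK[of x] e that False by auto
    thus ?thesis using False GK[of x] e(2) that F0 by (auto simp: F1_def)
  qed
  ultimately show ?thesis using e(1) by (intro exI[of _ e]) (auto intro: holomorphic_transform)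
qed

lemma quotient_holo:
  assumes S: "open S" and hol: "F holomorphic_on S" "G holomorphic_on S"
    and loc: "\<And>x0. x0 \<in> S \<Longrightarrow> G x0 = 0 \<Longrightarrow>
       \<exists>K T. open T \<and> x0 \<in> T \<and> T \<subseteq> S \<and> K holomorphic_on T \<and> K x0 \<noteq> 0 \<and> (\<forall>x\<in>T. G x = (x - x0) * K x)"
    and Fz: "\<And>x0. x0 \<in> S \<Longrightarrow> G x0 = 0 \<Longrightarrow> F x0 = 0"
  shows "(\<lambda>x. if G x \<noteq> 0 then F x / G x else deriv F x / deriv G x) holomorphic_on S"
proof -
  let ?h = "\<lambda>x. if G x \<noteq> 0 then F x / G x else deriv F x / deriv G x"
  have "\<exists>e>0. ?h holomorphic_on ball x0 e" if x0: "x0 \<in> S" for x0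
  proof (cases "G x0 = 0")
    case True
    then obtain K T where KT: "open T" "x0 \<in> T" "T \<subseteq> S" "K holomorphic_on T" "K x0 \<noteq> 0"
      "\<And>x. x \<in> T \<Longrightarrow> G x = (x - x0) * K x"
      using loc[OF x0] by blast
    show ?thesis
      by (rule local_removable[OF KT(1,2) holomorphic_on_subset[OF hol(1) KT(3)]
            holomorphic_on_subset[OF hol(2) KT(3)] KT(4) Fz[OF x0 True] KT(5,6)])
  next
    case False
    have "continuous (at x0) G" by (rule cont_at_of_holo[OF hol(2) S x0])
    then obtain e1 where e1: "e1 > 0" "\<And>y. dist x0 y < e1 \<Longrightarrow> G y \<noteq> 0"
      using continuous_at_avoid[of x0 G 0] False by auto
    obtain e2 where e2: "e2 > 0" "ball x0 e2 \<subseteq> S" using S x0 open_contains_ball by blast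
    define e where "e = min e1 e2"
    have e: "e > 0" "ball x0 e \<subseteq> S" "\<And>y. y \<in> ball x0 e \<Longrightarrow> G y \<noteq> 0"
      using e1 e2 by (auto simp: e_def)
    have "(\<lambda>x. F x / G x) holomorphic_on ball x0 e"
      using e by (intro holomorphic_on_divide holomorphic_on_subset[OF hol(1)] holomorphic_on_subset[OF hol(2)]) auto
    hence "?h holomorphic_on ball x0 e"
      by (rule holomorphic_transform) (use e in auto)
    thus ?thesis using e by blast
  qed
  hence "?h field_differentiable at x0" if "x0 \<in> S" for x0
    using that holomorphic_on_imp_differentiable_at[of ?h "ball x0 _" x0] by force
  thus ?thesis using S holomorphic_on_open field_differentiable_def by blast
qed

lemma theta_pair_p:
  assumes "norm p < 1" "p \<noteq> 0" "x \<noteq> 0" "c \<noteq> 0"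
  shows "theta (p * x * c) p * theta (p * x / c) p = (1 / x ^ 2) * (theta (x * c) p * theta (x / c) p)"
proof -
  have e1: "theta (p * x * c) p = - (1 / (x * c)) * theta (x * c) p"
    using theta_p[of p "x * c"] assms by (simp add: mult_ac)
  have e2: "theta (p * x / c) p = - (c / x) * theta (x / c) p"
    using theta_p[of p "x / c"] assms by (simp add: mult_ac)
  have "theta (p * x * c) p * theta (p * x / c) p =
     (- (1 / (x * c)) * theta (x * c) p) * (- (c / x) * theta (x / c) p)"
    by (simp only: e1 e2)
  also have "\<dots> = (1 / x ^ 2) * (theta (x * c) p * theta (x / c) p)"
    using assms by (simp add: field_simps power2_eq_square)
  finally show ?thesis .
qed

lemma G_local:
  assumes p: "norm p < 1" "p \<noteq> 0" and a: "a \<noteq> 0" "\<And>j::int. a ^ 2 \<noteq> p powi j"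
    and x0: "x0 = a * p powi k"
  shows "\<exists>K. K holomorphic_on -{0} \<and> K x0 \<noteq> 0 \<and>
            (\<forall>x\<in>-{0}. theta (x / a) p * theta (x * a) p = (x - x0) * K x)"
proof -
  obtain c m where cm: "c \<noteq> 0" "\<And>z. z \<noteq> 0 \<Longrightarrow> theta (p powi k * z) p = c * z powi m * theta z p"
    using theta_powi[OF p] by blast
  have x0nz: "x0 \<noteq> 0" using x0 a p by simp
  define K where "K = (\<lambda>x. - (c / x0) * (x / x0) powi m *
      (qpoch_inf (x / x0 * p) p * qpoch_inf (p / (x / x0)) p) * theta (x * a) p)"
  have "K holomorphic_on -{0}"
  proof -
    have h1: "(\<lambda>x. qpoch_inf (x / x0 * p) p) holomorphic_on -{0}"
      using x0nz by (intro qinf_comp_holo p holomorphic_intros)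
    have h2: "(\<lambda>x. qpoch_inf (p / (x / x0)) p) holomorphic_on -{0}"
      using x0nz by (intro qinf_comp_holo p holomorphic_intros) auto
    have h3: "(\<lambda>x. theta (x * a) p) holomorphic_on -{0}"
      using a by (intro theta_holo p holomorphic_intros) auto
    have h4: "(\<lambda>x. (x / x0) powi m) holomorphic_on -{0}"
      using x0nz by (intro holomorphic_intros) auto
    show ?thesis unfolding K_def
      by (intro holomorphic_on_mult h1 h2 h3 h4 holomorphic_intros)
  qed
  moreover have "K x0 \<noteq> 0"
  proof -
    have "qpoch_inf p p \<noteq> 0" by (rule qinf_pp_nonzero[OF p(1)])
    moreover have "theta (x0 * a) p \<noteq> 0"
    proof (rule theta_nonzero[OF p(1)])
      show "x0 * a \<noteq> 0" using x0nz a by simp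
      fix j :: int
      show "x0 * a \<noteq> p powi j"
      proof
        assume "x0 * a = p powi j"
        hence "a ^ 2 = p powi (j - k)" using x0 p
          by (simp add: power_int_diff power2_eq_square field_simps)
        thus False using a(2) by blast
      qed
    qed
    ultimately show ?thesis using cm(1) x0nz unfolding K_def by simp
  qed
  moreover have "theta (x / a) p * theta (x * a) p = (x - x0) * K x" if "x \<in> -{0}" for x
  proof -
    have xnz: "x \<noteq> 0" using that by simp
    have "x / a = p powi k * (x / x0)" using x0 a p x0nz by (simp add: field_simps)
    hence "theta (x / a) p = c * (x / x0) powi m * theta (x / x0) p"
      using cm(2)[of "x / x0"] xnz x0nz by simp
    also have "theta (x / x0) p = (1 - x / x0) * (qpoch_inf (x / x0 * p) p * qpoch_inf (p / (x / x0)) p)"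
      by (rule theta_factor[OF p(1)])
    finally have eq: "theta (x / a) p = c * (x / x0) powi m *
       ((1 - x / x0) * (qpoch_inf (x / x0 * p) p * qpoch_inf (p / (x / x0)) p))" .
    have "theta (x / a) p * theta (x * a) p = (c * (x / x0) powi m *
       ((1 - x / x0) * (qpoch_inf (x / x0 * p) p * qpoch_inf (p / (x / x0)) p))) * theta (x * a) p"
      by (simp only: eq)
    also have "\<dots> = (x - x0) * K x" unfolding K_def using x0nz by (simp add: field_simps)
    finally show ?thesis .
  qed
  ultimately show ?thesis by blast
qed

lemma deriv_scale:
  assumes "F holomorphic_on -{0}" "p \<noteq> 0" "\<And>z. z \<noteq> 0 \<Longrightarrow> F (p * z) = (1 / z ^ 2) * F z"
    and "x \<noteq> 0" "F x = 0"
  shows "deriv F (p * x) = (1 / (p * x ^ 2)) * deriv F x"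
proof -
  have op: "open (-{0::complex})" by auto
  have dF: "(F has_field_derivative deriv F z) (at z)" if "z \<noteq> 0" for z
    using assms(1) op that holomorphic_derivI by blast
  have "(F has_field_derivative deriv F (p * x)) (at (p * x))" using dF assms by simp
  moreover have "((\<lambda>z. p * z) has_field_derivative p) (at x)" by (auto intro!: derivative_eq_intros)
  ultimately have "((\<lambda>z. F (p * z)) has_field_derivative (deriv F (p * x) * p)) (at x)"
    by (rule DERIV_chain2)
  moreover have "((\<lambda>z. inverse (z ^ 2) * F z) has_field_derivative (inverse (x ^ 2) * deriv F x)) (at x)"
  proof -
    have d0: "((\<lambda>z. z ^ 2) has_field_derivative (2 * x)) (at x)"
      by (auto intro!: derivative_eq_intros)
    define D where "D = - (2 * x * inverse ((x ^ 2) ^ Suc (Suc 0)))"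
    have d1: "((\<lambda>z. inverse (z ^ 2)) has_field_derivative D) (at x)"
      unfolding D_def by (rule DERIV_inverse_fun[OF d0]) (use assms(4) in simp)
    have "((\<lambda>z. inverse (z ^ 2) * F z) has_field_derivative
        (inverse (x ^ 2) * deriv F x + D * F x)) (at x)"
      by (rule DERIV_mult'[OF d1 dF[OF assms(4)]])
    thus ?thesis using assms(5) by simp
  qed
  hence "((\<lambda>z. F (p * z)) has_field_derivative (inverse (x ^ 2) * deriv F x)) (at x)"
    by (rule has_field_derivative_transform_within_open[OF _ op])
       (use assms(3,4) in \<open>auto simp: divide_inverse\<close>)
  ultimately have "deriv F (p * x) * p = inverse (x ^ 2) * deriv F x"
    using DERIV_unique by blast
  hence "deriv F (p * x) = (inverse (x ^ 2) * deriv F x) / p" using assms(2)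
    by (simp add: nonzero_eq_divide_eq)
  thus ?thesis by (simp add: divide_inverse mult_ac)
qed

lemma add_generic:
  assumes p: "norm p < 1" "p \<noteq> 0" and nz: "y \<noteq> 0" "u \<noteq> 0" "v \<noteq> 0" "x \<noteq> 0"
    and g1: "\<And>j::int. u ^ 2 \<noteq> p powi j" and g2: "theta (y * u) p \<noteq> 0" "theta (y / u) p \<noteq> 0"
  shows "theta (x * y) p * theta (x / y) p * theta (u * v) p * theta (u / v) p
       - theta (x * v) p * theta (x / v) p * theta (u * y) p * theta (u / y) p
       = (u / y) * theta (y * v) p * theta (y / v) p * theta (x * u) p * theta (x / u) p"
proof -
  define F where "F = (\<lambda>x. theta (x * y) p * theta (x / y) p * (theta (u * v) p * theta (u / v) p)
       - theta (x * v) p * theta (x / v) p * (theta (u * y) p * theta (u / y) p)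
       - (u / y) * theta (y * v) p * theta (y / v) p * (theta (x * u) p * theta (x / u) p))"
  define G where "G = (\<lambda>x. theta (x / u) p * theta (x * u) p)"
  have op: "open (-{0::complex})" by auto
  have FH: "F holomorphic_on -{0}" unfolding F_def
    using nz by (intro holomorphic_intros theta_holo p) auto
  have GH: "G holomorphic_on -{0}" unfolding G_def
    using nz by (intro holomorphic_intros theta_holo p) auto
  have Fp: "F (p * z) = (1 / z ^ 2) * F z" if "z \<noteq> 0" for z
  proof -
    have ey: "theta (p * z * y) p * theta (p * z / y) p = (1 / z ^ 2) * (theta (z * y) p * theta (z / y) p)"
      using theta_pair_p[OF p that nz(1)] .
    have ev: "theta (p * z * v) p * theta (p * z / v) p = (1 / z ^ 2) * (theta (z * v) p * theta (z / v) p)"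
      using theta_pair_p[OF p that nz(3)] .
    have eu: "theta (p * z * u) p * theta (p * z / u) p = (1 / z ^ 2) * (theta (z * u) p * theta (z / u) p)"
      using theta_pair_p[OF p that nz(2)] .
    show ?thesis unfolding F_def by (simp only: ey ev eu) (simp add: algebra_simps)
  qed
  have Gp: "G (p * z) = (1 / z ^ 2) * G z" if "z \<noteq> 0" for z
    using theta_pair_p[OF p that nz(2)] unfolding G_def by (simp add: mult_ac)
  have r3: "theta (u / v) p = - (u / v) * theta (v / u) p"
    using theta_inv[OF p(1), of "v / u"] nz by simp
  have r6: "theta (u / y) p = - (u / y) * theta (y / u) p"
    using theta_inv[OF p(1), of "y / u"] nz by simp
  have Fu: "F u = 0" unfolding F_def using nz theta_one[OF p(1)] by simp
  have Fiu: "F (1 / u) = 0"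
  proof -
    have a1: "theta (1 / u * y) p = theta (y / u) p" by simp
    have a2: "theta (1 / u / y) p = - (1 / (u * y)) * theta (u * y) p"
      using theta_inv[OF p(1), of "u * y"] nz by simp
    have a4: "theta (1 / u * v) p = theta (v / u) p" by simp
    have a5: "theta (1 / u / v) p = - (1 / (u * v)) * theta (u * v) p"
      using theta_inv[OF p(1), of "u * v"] nz by simp
    have a7: "theta (1 / u * u) p = 0" using nz theta_one[OF p(1)] by simp
    have "F (1 / u) = theta (y / u) p * (- (1 / (u * y)) * theta (u * y) p)
        * (theta (u * v) p * (- (u / v) * theta (v / u) p))
      - theta (v / u) p * (- (1 / (u * v)) * theta (u * v) p)
        * (theta (u * y) p * (- (u / y) * theta (y / u) p))
      - (u / y) * theta (y * v) p * theta (y / v) p * (0 * theta (1 / u / u) p)"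
      unfolding F_def by (simp only: a1 a2 a4 a5 a7 r3 r6)
    also have "\<dots> = 0" using nz by (simp add: field_simps)
    finally show ?thesis .
  qed
  have Fy: "F y = 0"
  proof -
    have b1: "theta (y / y) p = 0" using nz theta_one[OF p(1)] by simp
    have b2: "theta (u * y) p = theta (y * u) p" by (simp add: mult.commute)
    have "F y = theta (y * y) p * 0 * (theta (u * v) p * theta (u / v) p)
       - theta (y * v) p * theta (y / v) p * (theta (y * u) p * (- (u / y) * theta (y / u) p))
       - (u / y) * theta (y * v) p * theta (y / v) p * (theta (y * u) p * theta (y / u) p)"
      unfolding F_def by (simp only: b1 b2 r6)
    also have "\<dots> = 0" by (simp add: algebra_simps)
    finally show ?thesis .
  qed
  have Gzero: "(\<exists>k. z = u * p powi k) \<or> (\<exists>k. z = (1 / u) * p powi k)" if zz: "z \<noteq> 0" "G z = 0" for z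
  proof -
    have "theta (z / u) p = 0 \<or> theta (z * u) p = 0" using that unfolding G_def by simp
    thus ?thesis
    proof
      assume "theta (z / u) p = 0"
      then obtain k where "z / u = p powi k"
        using theta_nonzero[OF p(1), of "z / u"] zz nz by auto
      hence "z = u * p powi k" using nz by (simp add: field_simps)
      thus ?thesis by blast
    next
      assume "theta (z * u) p = 0"
      then obtain k where "z * u = p powi k"
        using theta_nonzero[OF p(1), of "z * u"] zz nz by auto
      hence "z = (1 / u) * p powi k" using nz by (simp add: field_simps)
      thus ?thesis by blast
    qed
  qed
  have Fper: "(F (p * z) = 0) = (F z = 0)" if "z \<noteq> 0" for z
    using Fp[OF that] that by simp
  have Fz: "F x0 = 0" if "x0 \<in> -{0}" "G x0 = 0" for x0
  proof -
    have "F (p powi k * w) = 0 \<longleftrightarrow> F w = 0" if "w \<noteq> 0" for k w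
      using periodic_powi[where h = "\<lambda>z. F z = 0", OF p(2) Fper that] .
    moreover have "1 / u \<noteq> 0" using nz by simp
    ultimately have A: "F (p powi k * u) = 0" "F (p powi k * (1 / u)) = 0" for k
      using Fu Fiu nz by (metis, metis)
    from Gzero[of x0] that consider (a) k where "x0 = u * p powi k" | (b) k where "x0 = (1 / u) * p powi k"
      by auto
    thus ?thesis
    proof cases
      case a thus ?thesis using A(1)[of k] by (simp add: mult.commute)
    next
      case b thus ?thesis using A(2)[of k] by (simp add: mult.commute)
    qed
  qed
  have loc: "\<exists>K T. open T \<and> x0 \<in> T \<and> T \<subseteq> -{0} \<and> K holomorphic_on T \<and> K x0 \<noteq> 0 \<and>
       (\<forall>x\<in>T. G x = (x - x0) * K x)" if "x0 \<in> -{0}" "G x0 = 0" for x0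
  proof -
    from Gzero[of x0] that consider (a) k where "x0 = u * p powi k" | (b) k where "x0 = (1 / u) * p powi k"
      by auto
    thus ?thesis
    proof cases
      case a
      from G_local[OF p nz(2) g1 a] obtain K where
        "K holomorphic_on -{0}" "K x0 \<noteq> 0" "\<forall>x\<in>-{0}. theta (x / u) p * theta (x * u) p = (x - x0) * K x"
        by blast
      thus ?thesis unfolding G_def using op that by blast
    next
      case b
      have g1': "(1 / u) ^ 2 \<noteq> p powi j" for j :: int
      proof
        assume "(1 / u) ^ 2 = p powi j"
        hence "u ^ 2 = p powi (- j)" using nz p by (simp add: power_int_minus field_simps)
        thus False using g1 by blast
      qed
      from G_local[OF p _ g1' b] nz obtain K where
        "K holomorphic_on -{0}" "K x0 \<noteq> 0" "\<forall>x\<in>-{0}. theta (x / (1 / u)) p * theta (x * (1 / u)) p = (x - x0) * K x"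
        by auto
      moreover have "G x = theta (x / (1 / u)) p * theta (x * (1 / u)) p" for x
        unfolding G_def by (simp add: mult.commute)
      ultimately show ?thesis using op that by (intro exI[of _ K] exI[of _ "-{0}"]) auto
    qed
  qed
  define h where "h = (\<lambda>x. if G x \<noteq> 0 then F x / G x else deriv F x / deriv G x)"
  have hH: "h holomorphic_on -{0}" unfolding h_def
    by (rule quotient_holo[OF op FH GH loc Fz])
  have hp: "h (p * z) = h z" if "z \<noteq> 0" for z
  proof (cases "G z = 0")
    case True
    have "G (p * z) = 0" using Gp[OF that] True by simp
    moreover have "F z = 0" using Fz True that by simp
    moreover have "deriv F (p * z) = (1 / (p * z ^ 2)) * deriv F z"
      by (rule deriv_scale[OF FH p(2) Fp that]) (use \<open>F z = 0\<close> in auto)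
    moreover have "deriv G (p * z) = (1 / (p * z ^ 2)) * deriv G z"
      by (rule deriv_scale[OF GH p(2) Gp that True])
    ultimately show ?thesis unfolding h_def using True that p by simp
  next
    case False
    have "G (p * z) \<noteq> 0" using Gp[OF that] False that by simp
    thus ?thesis unfolding h_def using False Fp[OF that] Gp[OF that] that by simp
  qed
  have p0: "0 < norm p" using p by simp
  have "h x = h 1" by (rule periodic_const[OF p0 p(1) hH hp nz(4)])
  moreover have "h y = h 1" by (rule periodic_const[OF p0 p(1) hH hp nz(1)])
  moreover have "G y \<noteq> 0" using g2 unfolding G_def by simp
  hence "h y = 0" unfolding h_def using Fy by simp
  ultimately have hx: "h x = 0" by simp
  have "F x = 0"
  proof (cases "G x = 0")
    case True thus ?thesis using Fz nz by simp
  next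
    case False thus ?thesis using hx unfolding h_def by simp
  qed
  thus ?thesis unfolding F_def by (simp add: algebra_simps)
qed

lemma qinf_p0: "qpoch_inf z 0 = 1 - z"
proof -
  have "qpoch_inf 0 0 = 1" unfolding qpoch_inf_def by simp
  thus ?thesis using qinf_shift[of 0 z] by simp
qed

lemma theta_p0: "theta z 0 = 1 - z"
  unfolding theta_def by (simp add: qinf_p0)

lemma sq_eq_countable: "countable {u::complex. u ^ 2 = c}"
proof -
  have "{u::complex. u ^ 2 = c} \<subseteq> {csqrt c, - csqrt c}"
  proof
    fix u :: complex assume "u \<in> {u. u ^ 2 = c}"
    hence "u ^ 2 = (csqrt c) ^ 2" by simp
    hence "u = csqrt c \<or> u = - csqrt c" by (metis power2_eq_iff)
    thus "u \<in> {csqrt c, - csqrt c}" by auto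
  qed
  thus ?thesis by (rule countable_subset) simp
qed

theorem theta_addition:
  assumes p: "norm p < 1" and nz: "x \<noteq> 0" "y \<noteq> 0" "u \<noteq> 0" "v \<noteq> 0"
  shows "theta (x * y) p * theta (x / y) p * theta (u * v) p * theta (u / v) p
       - theta (x * v) p * theta (x / v) p * theta (u * y) p * theta (u / y) p
       = (u / y) * theta (y * v) p * theta (y / v) p * theta (x * u) p * theta (x / u) p"
proof (cases "p = 0")
  case True
  thus ?thesis using nz by (simp add: theta_p0 field_simps)
next
  case pnz: False
  define \<Phi> where "\<Phi> = (\<lambda>u. theta (x * y) p * theta (x / y) p * theta (u * v) p * theta (u / v) p
       - theta (x * v) p * theta (x / v) p * theta (u * y) p * theta (u / y) p
       - (u / y) * theta (y * v) p * theta (y / v) p * theta (x * u) p * theta (x / u) p)"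
  define B where "B = {0} \<union> (\<Union>j::int. {w::complex. w ^ 2 = p powi j} \<union> {p powi j / y} \<union> {y / p powi j})"
  have cB: "countable B" unfolding B_def
    by (intro countable_Un countable_UN countable_insert sq_eq_countable) auto
  have good: "\<Phi> w = 0" if "w \<notin> B" for w
  proof -
    have w0: "w \<noteq> 0" using that by (auto simp: B_def)
    have g1: "w ^ 2 \<noteq> p powi j" for j :: int using that by (auto simp: B_def)
    have "theta (y * w) p \<noteq> 0"
    proof (rule theta_nonzero[OF p])
      show "y * w \<noteq> 0" using w0 nz by simp
      fix j :: int show "y * w \<noteq> p powi j"
      proof
        assume "y * w = p powi j"
        hence "w = p powi j / y" using nz by (simp add: field_simps)
        thus False using that by (auto simp: B_def)
      qed
    qed
    moreover have "theta (y / w) p \<noteq> 0"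
    proof (rule theta_nonzero[OF p])
      show "y / w \<noteq> 0" using w0 nz by simp
      fix j :: int show "y / w \<noteq> p powi j"
      proof
        assume "y / w = p powi j"
        hence "w = y / p powi j" using nz w0 pnz by (simp add: field_simps)
        thus False using that by (auto simp: B_def)
      qed
    qed
    ultimately show ?thesis
      using add_generic[OF p pnz nz(2) w0 nz(4) nz(1) g1] unfolding \<Phi>_def by simp
  qed
  have hol: "\<Phi> holomorphic_on -{0}" unfolding \<Phi>_def
    using nz by (intro holomorphic_intros theta_holo p pnz) auto
  have "continuous (at u) \<Phi>"
    by (rule cont_at_of_holo[OF hol]) (use nz in auto)
  have "\<Phi> u = 0"
  proof (rule ccontr)
    assume "\<Phi> u \<noteq> 0"
    then obtain e where e: "e > 0" "\<And>w. dist u w < e \<Longrightarrow> \<Phi> w \<noteq> 0"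
      using continuous_at_avoid[OF \<open>continuous (at u) \<Phi>\<close>] by blast
    have "uncountable (ball u e)" using e(1) by (rule uncountable_ball)
    hence "\<not> ball u e \<subseteq> B" using cB countable_subset by blast
    then obtain w where "w \<in> ball u e" "w \<notin> B" by blast
    thus False using e(2)[of w] good[of w] by simp
  qed
  thus ?thesis unfolding \<Phi>_def by simp
qed

lemma three_term:
  assumes p: "norm p < 1" and nz: "a \<noteq> 0" "b \<noteq> 0" "c \<noteq> 0" "R \<noteq> 0" "Q \<noteq> 0"
  shows "theta (a * R) p * theta (b * R) p * theta (c * Q) p * theta (a / (b * c) * Q) p =
         theta Q p * theta (a * Q / b) p * theta (a * R / c) p * theta (b * c * R) p
         + Q * theta c p * theta (a / (b * c)) p * theta (a * R * Q) p * theta (b * R / Q) p"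
proof -
  define s where "s = csqrt (a / b)"
  have ss: "s * s = a / b" unfolding s_def by (metis power2_csqrt power2_eq_square)
  have s0: "s \<noteq> 0" using ss nz by auto
  define x where "x = R * a / s"
  define u where "u = Q * s"
  define v where "v = c / s"
  have x0: "x \<noteq> 0" "u \<noteq> 0" "v \<noteq> 0" using nz s0 by (auto simp: x_def u_def v_def)
  have E: "theta (x * s) p * theta (x / s) p * theta (u * v) p * theta (u / v) p
       - theta (x * v) p * theta (x / v) p * theta (u * s) p * theta (u / s) p
       = (u / s) * theta (s * v) p * theta (s / v) p * theta (x * u) p * theta (x / u) p"
    by (rule theta_addition[OF p x0(1) s0 x0(2,3)])
  have e1: "x * s = a * R" using s0 by (simp add: x_def)
  have e2: "x / s = b * R" using s0 nz ss by (simp add: x_def field_simps)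
  have e3: "u * v = c * Q" using s0 by (simp add: u_def v_def)
  have e4: "u / v = a / (b * c) * Q"
  proof -
    have "u / v = Q * (s * s) / c" using s0 nz by (simp add: u_def v_def field_simps)
    thus ?thesis using ss by simp
  qed
  have e5: "x * v = b * c * R"
  proof -
    have "x * v = R * a * c / (s * s)" using s0 by (simp add: x_def v_def field_simps)
    thus ?thesis using ss nz by (simp add: field_simps)
  qed
  have e6: "x / v = a * R / c" using s0 nz by (simp add: x_def v_def field_simps)
  have e7: "u * s = a * Q / b" using ss by (simp add: u_def mult.assoc)
  have e8: "u / s = Q" using s0 by (simp add: u_def)
  have e9: "s * v = c" using s0 by (simp add: v_def)
  have e10: "s / v = a / (b * c)"
  proof -
    have "s / v = (s * s) / c" using s0 nz by (simp add: v_def field_simps)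
    thus ?thesis using ss by simp
  qed
  have e11: "x * u = a * R * Q" using s0 by (simp add: x_def u_def field_simps)
  have e12: "x / u = b * R / Q"
  proof -
    have "x / u = R * a / ((s * s) * Q)" using s0 nz by (simp add: x_def u_def field_simps)
    thus ?thesis using ss nz by (simp add: field_simps)
  qed
  from E show ?thesis unfolding e1 e2 e3 e4 e5 e6 e7 e8 e9 e10 e11 e12
    by (simp add: algebra_simps)
qed

definition pp :: "complex \<Rightarrow> complex \<Rightarrow> complex \<Rightarrow> nat \<Rightarrow> complex" where
  "pp x q p k = (\<Prod>i<k. theta (x * q ^ i) p)"

lemma pp_0 [simp]: "pp x q p 0 = 1" by (simp add: pp_def)

lemma pp_Suc: "pp x q p (Suc k) = pp x q p k * theta (x * q ^ k) p"
  by (simp add: pp_def)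

lemma pp_Suc': "pp x q p (Suc k) = theta x p * pp (x * q) q p k"
  unfolding pp_def prod.lessThan_Suc_shift by (simp add: mult.assoc)

lemma epoch_nat: "epoch x q p (int k) = pp x q p k"
  by (simp add: epoch_def pp_def)

lemma gasper:
  fixes a b c q r p :: complex
  assumes p: "norm p < 1" and nz: "a \<noteq> 0" "b \<noteq> 0" "c \<noteq> 0" "q \<noteq> 0" "r \<noteq> 0"
  defines "Dg \<equiv> \<lambda>k. pp q q p k * pp (a * q / b) q p k * pp (a * r / c) r p k * pp (b * c * r) r p k"
    and "tg \<equiv> \<lambda>k. theta (a * r ^ k * q ^ k) p * theta (b * r ^ k / q ^ k) p * pp a r p k * pp b r p k
                  * pp c q p k * pp (a / (b * c)) q p k * q ^ k"
    and "Ng \<equiv> \<lambda>k. pp a r p (Suc k) * pp b r p (Suc k) * pp (c * q) q p k * pp (a / (b * c) * q) q p k"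
  assumes D: "\<And>k. k \<le> n \<Longrightarrow> Dg k \<noteq> 0"
  shows "(\<Sum>k\<le>n. tg k / Dg k) = Ng n / Dg n"
  using D
proof (induction n)
  case 0
  show ?case by (simp add: tg_def Ng_def Dg_def pp_def)
next
  case (Suc n)
  define R where "R = r ^ Suc n"
  define Q where "Q = q ^ Suc n"
  have R0: "R \<noteq> 0" and Q0: "Q \<noteq> 0" using nz by (auto simp: R_def Q_def)
  have Dn: "Dg n \<noteq> 0" using Suc.prems by simp
  have DS: "Dg (Suc n) \<noteq> 0" using Suc.prems by simp
  define \<delta> where "\<delta> = theta Q p * theta (a * Q / b) p * theta (a * R / c) p * theta (b * c * R) p"
  have Dstep: "Dg (Suc n) = Dg n * \<delta>"
  proof -
    have eqs: "q * q ^ n = Q" "a * q / b * q ^ n = a * Q / b" "a * r / c * r ^ n = a * R / c"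
         "b * c * r * r ^ n = b * c * R"
      by (simp_all add: Q_def R_def)
    show ?thesis unfolding Dg_def \<delta>_def pp_Suc eqs by (simp only: mult_ac)
  qed
  have Nstep: "Ng (Suc n) = Ng n * (theta (a * R) p * theta (b * R) p * theta (c * Q) p * theta (a / (b * c) * Q) p)"
  proof -
    have eqs: "c * q * q ^ n = c * Q" "a / (b * c) * q * q ^ n = a / (b * c) * Q"
         "a * r ^ Suc n = a * R" "b * r ^ Suc n = b * R"
      by (simp_all add: Q_def R_def)
    show ?thesis unfolding Ng_def pp_Suc[of _ _ _ "Suc n"] pp_Suc[of _ _ _ n] eqs
      by (simp only: mult_ac)
  qed
  have tstep: "tg (Suc n) = Ng n * (Q * theta c p * theta (a / (b * c)) p * theta (a * R * Q) p * theta (b * R / Q) p)"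
  proof -
    have eqs: "r ^ Suc n = R" "q ^ Suc n = Q"
      by (simp_all add: R_def Q_def)
    show ?thesis unfolding tg_def Ng_def eqs pp_Suc'[of c] pp_Suc'[of "a / (b * c)"]
      by (simp only: mult_ac)
  qed
  have three: "theta (a * R) p * theta (b * R) p * theta (c * Q) p * theta (a / (b * c) * Q) p =
      \<delta> + Q * theta c p * theta (a / (b * c)) p * theta (a * R * Q) p * theta (b * R / Q) p"
    unfolding \<delta>_def by (rule three_term[OF p nz(1,2,3) R0 Q0])
  have d0: "\<delta> \<noteq> 0" using DS Dstep by simp
  have "(\<Sum>k\<le>Suc n. tg k / Dg k) = Ng n / Dg n + tg (Suc n) / Dg (Suc n)"
    using Suc by simp
  also have "\<dots> = Ng (Suc n) / Dg (Suc n)"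
    unfolding tstep Nstep Dstep three using Dn d0 by (simp add: field_simps)
  finally show ?case .
qed

lemma theta_inv': "norm p < 1 \<Longrightarrow> z \<noteq> 0 \<Longrightarrow> theta z p = - z * theta (1 / z) p"
  using theta_inv[of p "1 / z"] by simp

lemma epoch_step:
  assumes "q \<noteq> 0" "0 \<le> n \<or> theta (x * q powi n) p \<noteq> 0"
  shows "epoch x q p (n + 1) = epoch x q p n * theta (x * q powi n) p"
proof (cases "0 \<le> n")
  case True
  have "nat (n + 1) = Suc (nat n)" using True by simp
  moreover have "q powi n = q ^ nat n" using True by (simp add: power_int_def)
  ultimately show ?thesis using True by (simp add: epoch_def)
next
  case False
  define M where "M = nat (- n - 1)"
  have nM: "nat (- n) = Suc M" using False by (simp add: M_def)
  have nM': "nat (- (n + 1)) = M" using False by (simp add: M_def)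
  have th: "theta (x * q powi n) p \<noteq> 0" using assms False by auto
  define P' where "P' = (\<Prod>k<M. theta (x * q powi (n + 1 + int k)) p)"
  have "(\<Prod>k<nat (- n). theta (x * q powi (n + int k)) p) = theta (x * q powi n) p * P'"
    unfolding nM prod.lessThan_Suc_shift P'_def by (simp add: add_ac)
  hence en: "epoch x q p n = 1 / (theta (x * q powi n) p * P')"
    using False by (simp add: epoch_def)
  have en1: "epoch x q p (n + 1) = 1 / P'"
  proof (cases "0 \<le> n + 1")
    case True
    hence "M = 0" using nM' by simp
    moreover have "n + 1 = 0" using True False by simp
    ultimately show ?thesis by (simp add: epoch_def P'_def)
  next
    case False
    thus ?thesis unfolding epoch_def nM' P'_def by simp
  qed
  show ?thesis unfolding en en1 using th by simp
qed

lemma epoch_nz_factor: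
  assumes "epoch x q p m \<noteq> 0" "m + int i < 0"
  shows "theta (x * q powi (m + int i)) p \<noteq> 0"
proof -
  have m: "m < 0" using assms(2) by simp
  have "(\<Prod>k<nat (- m). theta (x * q powi (m + int k)) p) \<noteq> 0"
    using assms(1) m by (auto simp: epoch_def)
  moreover have "i \<in> {..<nat (- m)}" using assms(2) by auto
  ultimately show ?thesis by (auto simp: prod_zero_iff)
qed

lemma epoch_add:
  assumes "q \<noteq> 0" "epoch x q p m \<noteq> 0"
  shows "epoch x q p (m + int k) = epoch x q p m * pp (x * q powi m) q p k"
proof (induction k)
  case 0 thus ?case by simp
next
  case (Suc k)
  have c: "0 \<le> m + int k \<or> theta (x * q powi (m + int k)) p \<noteq> 0"
    using epoch_nz_factor[OF assms(2), of k] by linarith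
  have "epoch x q p (m + int (Suc k)) = epoch x q p (m + int k + 1)" by (simp add: add_ac)
  also have "\<dots> = epoch x q p (m + int k) * theta (x * q powi (m + int k)) p"
    by (rule epoch_step[OF assms(1) c])
  also have "x * q powi (m + int k) = x * q powi m * q ^ k"
    using assms(1) by (simp add: power_int_add mult_ac)
  finally show ?case using Suc by (simp add: pp_Suc mult_ac)
qed

lemma pp_rev:
  assumes p: "norm p < 1" and nz: "x \<noteq> 0" "q \<noteq> 0" and k: "k \<le> N"
  shows "pp x q p N = pp x q p (N - k) * ((\<Prod>i<k. - (x * q ^ (N - 1 - i))) * pp (q powi (1 - int N) / x) q p k)"
  using k
proof (induction k)
  case 0 thus ?case by simp
next
  case (Suc k)
  have NS: "N - k = Suc (N - Suc k)" using Suc.prems by simp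
  define z where "z = x * q ^ (N - Suc k)"
  define y where "y = q powi (1 - int N) / x"
  have z0: "z \<noteq> 0" using nz by (simp add: z_def)
  have iz: "1 / z = y * q ^ k"
  proof -
    have "q powi (1 - int N) * q ^ k * q ^ (N - Suc k) = q powi (1 - int N + int k + int (N - Suc k))"
      using nz by (simp add: power_int_add)
    also have "1 - int N + int k + int (N - Suc k) = 0" using Suc.prems by simp
    finally have "q powi (1 - int N) * q ^ k * q ^ (N - Suc k) = 1" by simp
    thus ?thesis using nz unfolding z_def y_def by (simp add: field_simps)
  qed
  have "pp x q p (N - k) = pp x q p (N - Suc k) * theta z p"
    unfolding NS pp_Suc z_def ..
  also have "theta z p = - z * theta (y * q ^ k) p"
    using theta_inv'[OF p z0] iz by simp
  finally have e: "pp x q p (N - k) = pp x q p (N - Suc k) * (- z * theta (y * q ^ k) p)" .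
  have "N - 1 - k = N - Suc k" by simp
  hence m: "(\<Prod>i<Suc k. - (x * q ^ (N - 1 - i))) = (\<Prod>i<k. - (x * q ^ (N - 1 - i))) * (- z)"
    by (simp add: z_def)
  have IH: "pp x q p N = pp x q p (N - k) * ((\<Prod>i<k. - (x * q ^ (N - 1 - i))) * pp y q p k)"
    using Suc by (simp add: y_def)
  show ?case unfolding y_def[symmetric] m pp_Suc IH e by (simp only: mult_ac)
qed

lemma alg_final:
  fixes PQN PQNk M1 c1 PYN PYNk M2 d1 e1 e2 X1 X2 qq z sg Bk Qk \<sigma> t1 t2 E1 E2 a1 b1 :: complex
  assumes "PQN = PQNk * (M1 * c1)" "PYN = PYNk * (M2 * d1)" "PQN \<noteq> 0" "PYN \<noteq> 0"
    "e1 \<noteq> 0" "e2 \<noteq> 0" "X1 \<noteq> 0" "X2 \<noteq> 0" "qq \<noteq> 0" "z \<noteq> 0" "sg * Bk * (M1 * M2) = Qk"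
  shows "(\<sigma> * sg * t1 * t2 * E1 * E2 / (PQNk * (e1 * X1) * (e2 * X2) * PYNk)) * (a1 * b1 / (qq * z) * Bk)
     = (\<sigma> * E1 * E2 / (PQN * e1 * e2 * PYN)) * (t1 * t2 * a1 * b1 * c1 * d1 * Qk) / (qq * z * X1 * X2)"
proof -
  have nz: "PQNk \<noteq> 0" "M1 \<noteq> 0" "c1 \<noteq> 0" "PYNk \<noteq> 0" "M2 \<noteq> 0" "d1 \<noteq> 0"
    using assms(1-4) by auto
  show ?thesis unfolding assms(1,2) assms(11)[symmetric] using nz assms(5-10)
    by (simp add: field_simps)
qed

lemma mono_id:
  fixes a b q :: complex and m n :: int
  assumes nz: "q \<noteq> 0" "a \<noteq> 0" "b \<noteq> 0" and N: "int N = n - m" and k: "k \<le> N"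
  shows "(-1) ^ k * ((- (a / b) * q powi (1 + 2 * m)) ^ k * q ^ (2 * (k choose 2))) *
      ((\<Prod>i<k. - (q * q ^ (N - 1 - i))) * (\<Prod>i<k. - (b * q powi (1 - 2 * n) / a * q ^ (N - 1 - i)))) = q ^ k"
  using k
proof (induction k)
  case 0 thus ?case by (simp add: binomial_eq_0)
next
  case (Suc k)
  have ch: "Suc k choose 2 = (k choose 2) + k"
    by (simp add: numeral_2_eq_2 add.commute)
  define t where "t = N - 1 - k"
  have t: "int t = int N - 1 - int k" using Suc.prems by (simp add: t_def)
  have key: "(-1) * (- (a / b) * q powi (1 + 2 * m)) * q ^ (2 * k) *
      ((- (q * q ^ t)) * (- (b * q powi (1 - 2 * n) / a * q ^ t))) = q"
  proof -
    define K2 where "K2 = 2 * k"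
    have "(-1) * (- (a / b) * q powi (1 + 2 * m)) * q ^ K2 *
      ((- (q * q ^ t)) * (- (b * q powi (1 - 2 * n) / a * q ^ t)))
      = (a / b) * (b / a) * (q powi (1 + 2 * m) * q ^ K2 * q * q ^ t
          * q powi (1 - 2 * n) * q ^ t)"
      by (simp add: field_simps)
    also have "q powi (1 + 2 * m) * q ^ K2 * q * q ^ t * q powi (1 - 2 * n) * q ^ t =
        q powi ((1 + 2 * m) + int K2 + 1 + int t + (1 - 2 * n) + int t)"
      unfolding power_int_add[OF disjI1[OF nz(1)]] power_int_of_nat by simp
    also have "(1 + 2 * m) + int K2 + 1 + int t + (1 - 2 * n) + int t = 1"
      using t N by (simp add: K2_def)
    finally show ?thesis using nz by (simp add: K2_def)
  qed
  have "(-1) ^ Suc k * ((- (a / b) * q powi (1 + 2 * m)) ^ Suc k * q ^ (2 * (Suc k choose 2))) *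
      ((\<Prod>i<Suc k. - (q * q ^ (N - 1 - i))) * (\<Prod>i<Suc k. - (b * q powi (1 - 2 * n) / a * q ^ (N - 1 - i))))
    = ((-1) ^ k * ((- (a / b) * q powi (1 + 2 * m)) ^ k * q ^ (2 * (k choose 2))) *
      ((\<Prod>i<k. - (q * q ^ (N - 1 - i))) * (\<Prod>i<k. - (b * q powi (1 - 2 * n) / a * q ^ (N - 1 - i)))))
      * ((-1) * (- (a / b) * q powi (1 + 2 * m)) * q ^ (2 * k) *
      ((- (q * q ^ t)) * (- (b * q powi (1 - 2 * n) / a * q ^ t))))"
    unfolding ch t_def by (simp add: power_add mult_ac)
  also have "\<dots> = q ^ k * q" using Suc key by simp
  finally show ?case by simp
qed

lemma minus_one_powi_double: "(-1 :: complex) powi (n + n) = 1"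
proof -
  have "(-1 :: complex) powi (n + n) = (-1) powi n * (-1) powi n"
    by (simp add: power_int_add)
  also have "\<dots> = ((-1) * (-1)) powi n" by (simp add: power_int_mult_distrib)
  finally show ?thesis by simp
qed

theorem mainTheorem8:
  fixes a b q r p :: complex and m n :: int
  assumes "norm p < 1"
    and "a \<noteq> 0" and "b \<noteq> 0" and "q \<noteq> 0" and "r \<noteq> 0"
    and "m \<le> n"
    and "epoch_defined (a * r * q powi n) r p (n - 1)"
    and "epoch_defined (b * r * q powi (- n)) r p (n - 1)"
    and "\<And>j. m \<le> j \<Longrightarrow> j \<le> n \<Longrightarrow>
           epoch q q p (n - j) * epoch (a * r * q powi n) r p j * epoch (b * r * q powi (- n)) r p j
             * epoch (b * q powi (1 - 2 * n) / a) q p (n - j) \<noteq> 0"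
    and "\<And>j. m \<le> j \<Longrightarrow> j \<le> n \<Longrightarrow>
           epoch q q p (j - m) * epoch (a * q powi (1 + 2 * m) / b) q p (j - m) \<noteq> 0"
  shows "(\<Sum>j\<in>{m..n}. coeffA a b q r p n j * coeffB a b q r p j m) = (if n = m then 1 else 0)"
proof -
  note p = assms(1) and nz = assms(2-5)
  define X1 where "X1 = a * r * q powi n"
  define X2 where "X2 = b * r * q powi (- n)"
  define Y2 where "Y2 = b * q powi (1 - 2 * n) / a"
  define Z where "Z = a * q powi (1 + 2 * m) / b"
  define E1 where "E1 = epoch X1 r p (n - 1)"
  define E2 where "E2 = epoch X2 r p (n - 1)"
  have H1: "epoch q q p (n - j) * epoch X1 r p j * epoch X2 r p j * epoch Y2 q p (n - j) \<noteq> 0"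
    if "m \<le> j" "j \<le> n" for j
    using assms(9)[OF that] unfolding X1_def X2_def Y2_def .
  have H2: "epoch q q p (j - m) * epoch Z q p (j - m) \<noteq> 0" if "m \<le> j" "j \<le> n" for j
    using assms(10)[OF that] unfolding Z_def .
  have cA: "coeffA a b q r p n j = (-1) powi (n + j) * theta (a * r powi j * q powi j) p
       * theta (b * r powi j * q powi (- j)) p * E1 * E2
       / (epoch q q p (n - j) * epoch X1 r p j * epoch X2 r p j * epoch Y2 q p (n - j))" for j
    unfolding coeffA_def X1_def X2_def Y2_def E1_def E2_def ..
  show ?thesis
  proof (cases "n = m")
    case True
    have B: "coeffB a b q r p n n = 1" by (simp add: coeffB_def epoch_def binomial_eq_0)
    have st1: "epoch X1 r p n = E1 * theta (a * r powi n * q powi n) p"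
    proof -
      have c: "0 \<le> n - 1 \<or> theta (X1 * r powi (n - 1)) p \<noteq> 0"
      proof (cases "0 \<le> n - 1")
        case False
        hence "(\<Prod>k<nat (- (n - 1)). theta (X1 * r powi (n - 1 + int k)) p) \<noteq> 0"
          using assms(7) unfolding epoch_defined_def X1_def by simp
        hence "\<forall>i\<in>{..<nat (- (n - 1))}. theta (X1 * r powi (n - 1 + int i)) p \<noteq> 0"
          by (simp add: prod_zero_iff)
        moreover have "0 \<in> {..<nat (- (n - 1))}" using False by simp
        ultimately have "theta (X1 * r powi (n - 1 + int 0)) p \<noteq> 0" by blast
        thus ?thesis by simp
      qed simp
      have "epoch X1 r p (n - 1 + 1) = E1 * theta (X1 * r powi (n - 1)) p"
        unfolding E1_def by (rule epoch_step[OF nz(4) c])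
      moreover have "X1 * r powi (n - 1) = a * r powi n * q powi n"
        using nz unfolding X1_def by (simp add: power_int_diff field_simps)
      ultimately show ?thesis by simp
    qed
    have st2: "epoch X2 r p n = E2 * theta (b * r powi n * q powi (- n)) p"
    proof -
      have c: "0 \<le> n - 1 \<or> theta (X2 * r powi (n - 1)) p \<noteq> 0"
      proof (cases "0 \<le> n - 1")
        case False
        hence "(\<Prod>k<nat (- (n - 1)). theta (X2 * r powi (n - 1 + int k)) p) \<noteq> 0"
          using assms(8) unfolding epoch_defined_def X2_def by simp
        hence "\<forall>i\<in>{..<nat (- (n - 1))}. theta (X2 * r powi (n - 1 + int i)) p \<noteq> 0"
          by (simp add: prod_zero_iff)
        moreover have "0 \<in> {..<nat (- (n - 1))}" using False by simp
        ultimately have "theta (X2 * r powi (n - 1 + int 0)) p \<noteq> 0" by blast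
        thus ?thesis by simp
      qed simp
      have "epoch X2 r p (n - 1 + 1) = E2 * theta (X2 * r powi (n - 1)) p"
        unfolding E2_def by (rule epoch_step[OF nz(4) c])
      moreover have "X2 * r powi (n - 1) = b * r powi n * q powi (- n)"
        using nz unfolding X2_def by (simp add: power_int_diff field_simps)
      ultimately show ?thesis by simp
    qed
    have "epoch X1 r p n * epoch X2 r p n \<noteq> 0" using H1[of n] True by simp
    hence "coeffA a b q r p n n = 1"
      unfolding cA st1 st2 by (simp add: minus_one_powi_double epoch_def)
    thus ?thesis using True B by simp
  next
    case False
    define N where "N = nat (n - m)"
    have N: "int N = n - m" using assms(6) by (simp add: N_def)
    have N1: "N \<ge> 1" using False assms(6) N by linarith
    define A where "A = a * r powi m * q powi m"
    define Bb where "Bb = b * r powi m * q powi (- m)"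
    define c where "c = q powi (- int N)"
    have A0: "A \<noteq> 0" and B0: "Bb \<noteq> 0" and c0: "c \<noteq> 0"
      using nz by (auto simp: A_def Bb_def c_def)
    define e1 where "e1 = epoch X1 r p m"
    define e2 where "e2 = epoch X2 r p m"
    define \<sigma> where "\<sigma> = (-1 :: complex) powi (n + m)"
    define PQN where "PQN = pp q q p N"
    define PYN where "PYN = pp Y2 q p N"
    define Cc where "Cc = \<sigma> * E1 * E2 / (PQN * e1 * e2 * PYN)"
    define Dg where "Dg = (\<lambda>k. pp q q p k * pp (A * q / Bb) q p k * pp (A * r / c) r p k * pp (Bb * c * r) r p k)"
    define tg where "tg = (\<lambda>k. theta (A * r ^ k * q ^ k) p * theta (Bb * r ^ k / q ^ k) p * pp A r p k * pp Bb r p k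
                  * pp c q p k * pp (A / (Bb * c)) q p k * q ^ k)"
    define Ng where "Ng = (\<lambda>k. pp A r p (Suc k) * pp Bb r p (Suc k) * pp (c * q) q p k * pp (A / (Bb * c) * q) q p k)"
    have Hm: "epoch q q p (n - m) * epoch X1 r p m * epoch X2 r p m * epoch Y2 q p (n - m) \<noteq> 0"
      using H1[of m] assms(6) by simp
    have PQN0: "PQN \<noteq> 0" and PYN0: "PYN \<noteq> 0" and e10: "e1 \<noteq> 0" and e20: "e2 \<noteq> 0"
      using Hm unfolding PQN_def PYN_def e1_def e2_def N[symmetric] epoch_nat by auto
    have sq: "q powi m * q powi m = q powi (m * 2)"
      using nz by (simp add: power_int_add[symmetric] mult_2_right)
    have eqZ: "A * q / Bb = Z" using nz sq unfolding A_def Bb_def Z_def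
      by (simp add: power_int_add power_int_minus field_simps)
    have eqX1: "A * r / c = X1 * r powi m"
    proof -
      have "q powi m * q powi (int N) = q powi n" using nz N by (simp add: power_int_add[symmetric])
      thus ?thesis using nz unfolding A_def c_def X1_def by (simp add: power_int_minus field_simps)
    qed
    have eqX2: "Bb * c * r = X2 * r powi m"
    proof -
      have "q powi (- m) * q powi (- int N) = q powi (- n)" using nz N by (simp add: power_int_add[symmetric])
      thus ?thesis using nz unfolding Bb_def c_def X2_def by (simp add: mult_ac)
    qed
    have eqc: "q powi (1 - int N) / q = c"
    proof -
      have "q powi ((1 - int N) - 1) = q powi (1 - int N) / q powi 1"
        by (rule power_int_diff) (use nz in simp)
      thus ?thesis unfolding c_def by simp
    qed
    have eqd: "q powi (1 - int N) / Y2 = A / (Bb * c)"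
    proof -
      have ex: "(1 - int N) + (2 * n - 1) = 2 * m + int N" using N by simp
      have "q powi (1 - int N) * q powi (2 * n - 1) = q powi ((1 - int N) + (2 * n - 1))"
        by (rule power_int_add[symmetric]) (use nz in simp)
      also have "\<dots> = q powi (2 * m) * q powi (int N)"
        unfolding ex using nz by (simp add: power_int_add)
      finally have "q powi (1 - int N) * q powi (2 * n - 1) = q powi (2 * m) * q powi (int N)" .
      thus ?thesis using nz sq unfolding Y2_def A_def Bb_def c_def
        by (simp add: power_int_minus power_int_diff power_int_add field_simps)
    qed
    have Tk: "coeffA a b q r p n (m + int k) * coeffB a b q r p (m + int k) m = Cc * tg k / Dg k"
      and Dk: "Dg k \<noteq> 0" if k: "k \<le> N" for k
    proof -
      have j1: "m \<le> m + int k" and j2: "m + int k \<le> n" using k N by auto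
      have nk: "n - (m + int k) = int (N - k)" using k N by simp
      have jm: "m + int k - m = int k" by simp
      have EX1: "epoch X1 r p (m + int k) = e1 * pp (X1 * r powi m) r p k"
        unfolding e1_def by (rule epoch_add[OF nz(4)]) (use e10 e1_def in simp)
      have EX2: "epoch X2 r p (m + int k) = e2 * pp (X2 * r powi m) r p k"
        unfolding e2_def by (rule epoch_add[OF nz(4)]) (use e20 e2_def in simp)
      have Hk: "pp q q p (N - k) * (e1 * pp (X1 * r powi m) r p k) * (e2 * pp (X2 * r powi m) r p k)
          * pp Y2 q p (N - k) \<noteq> 0"
        using H1[OF j1 j2] unfolding nk epoch_nat EX1 EX2 .
      have H2k: "pp q q p k * pp Z q p k \<noteq> 0" using H2[OF j1 j2] unfolding jm epoch_nat .
      have X1k: "pp (X1 * r powi m) r p k \<noteq> 0" and X2k: "pp (X2 * r powi m) r p k \<noteq> 0"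
        using Hk by auto
      show Dk: "Dg k \<noteq> 0" unfolding Dg_def eqZ eqX1 eqX2 using H2k X1k X2k by simp
      have ta: "a * r powi (m + int k) * q powi (m + int k) = A * r ^ k * q ^ k"
        using nz unfolding A_def by (simp add: power_int_add mult_ac)
      have qmk: "q powi (- (m + int k)) = inverse (q powi m * q ^ k)"
        unfolding power_int_minus power_int_add[OF disjI1[OF nz(3)]] power_int_of_nat ..
      have qm: "q powi (- m) = inverse (q powi m)" by (rule power_int_minus)
      have rmk: "r powi (m + int k) = r powi m * r ^ k"
        unfolding power_int_add[OF disjI1[OF nz(4)]] power_int_of_nat ..
      have tb: "b * r powi (m + int k) * q powi (- (m + int k)) = Bb * r ^ k / q ^ k"
        unfolding Bb_def qmk qm rmk using nz by (simp add: field_simps)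
      have sg: "(-1 :: complex) powi (n + (m + int k)) = \<sigma> * (-1) ^ k"
        unfolding \<sigma>_def by (simp add: power_int_add add.assoc)
      have cA': "coeffA a b q r p n (m + int k) = \<sigma> * (-1) ^ k * theta (A * r ^ k * q ^ k) p
         * theta (Bb * r ^ k / q ^ k) p * E1 * E2
         / (pp q q p (N - k) * (e1 * pp (X1 * r powi m) r p k) * (e2 * pp (X2 * r powi m) r p k) * pp Y2 q p (N - k))"
        unfolding cA sg ta tb nk epoch_nat EX1 EX2 ..
      have cB': "coeffB a b q r p (m + int k) m = pp A r p k * pp Bb r p k / (pp q q p k * pp Z q p k)
          * ((- (a / b) * q powi (1 + 2 * m)) ^ k * q ^ (2 * (k choose 2)))"
        unfolding coeffB_def jm epoch_nat A_def[symmetric] Bb_def[symmetric] Z_def[symmetric]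
        by (simp add: mult.assoc)
      have Y0: "Y2 \<noteq> 0" using nz by (simp add: Y2_def)
      have rq: "PQN = pp q q p (N - k) * ((\<Prod>i<k. - (q * q ^ (N - 1 - i))) * pp c q p k)"
        unfolding PQN_def using pp_rev[OF p nz(3) nz(3) k] unfolding eqc .
      have rY: "PYN = pp Y2 q p (N - k) * ((\<Prod>i<k. - (Y2 * q ^ (N - 1 - i))) * pp (A / (Bb * c)) q p k)"
        unfolding PYN_def using pp_rev[OF p Y0 nz(3) k] unfolding eqd .
      have mono: "(-1) ^ k * ((- (a / b) * q powi (1 + 2 * m)) ^ k * q ^ (2 * (k choose 2))) *
          ((\<Prod>i<k. - (q * q ^ (N - 1 - i))) * (\<Prod>i<k. - (Y2 * q ^ (N - 1 - i)))) = q ^ k"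
        unfolding Y2_def by (rule mono_id[OF nz(3,1,2) N k])
      have "coeffA a b q r p n (m + int k) * coeffB a b q r p (m + int k) m =
          (\<sigma> * E1 * E2 / (PQN * e1 * e2 * PYN)) *
          (theta (A * r ^ k * q ^ k) p * theta (Bb * r ^ k / q ^ k) p * pp A r p k * pp Bb r p k
           * pp c q p k * pp (A / (Bb * c)) q p k * q ^ k) /
          (pp q q p k * pp Z q p k * pp (X1 * r powi m) r p k * pp (X2 * r powi m) r p k)"
        unfolding cA' cB'
        by (rule alg_final[OF rq rY PQN0 PYN0 e10 e20 X1k X2k _ _ mono]) (use H2k in auto)
      thus "coeffA a b q r p n (m + int k) * coeffB a b q r p (m + int k) m = Cc * tg k / Dg k"
        unfolding Cc_def tg_def Dg_def eqZ eqX1 eqX2 .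
    qed
    have reidx: "{m..n} = (\<lambda>k. m + int k) ` {..N}"
    proof
      show "{m..n} \<subseteq> (\<lambda>k. m + int k) ` {..N}"
      proof
        fix j assume "j \<in> {m..n}"
        hence "j = m + int (nat (j - m))" "nat (j - m) \<in> {..N}" using N by auto
        thus "j \<in> (\<lambda>k. m + int k) ` {..N}" by blast
      qed
    qed (use N in auto)
    have "(\<Sum>j\<in>{m..n}. coeffA a b q r p n j * coeffB a b q r p j m)
        = (\<Sum>k\<le>N. coeffA a b q r p n (m + int k) * coeffB a b q r p (m + int k) m)"
      unfolding reidx by (subst sum.reindex) (auto simp: inj_on_def)
    also have "\<dots> = (\<Sum>k\<le>N. Cc * (tg k / Dg k))" by (intro sum.cong) (auto simp: Tk)
    also have "\<dots> = Cc * (\<Sum>k\<le>N. tg k / Dg k)" by (simp add: sum_distrib_left)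
    also have "(\<Sum>k\<le>N. tg k / Dg k) = Ng N / Dg N"
      unfolding tg_def Dg_def Ng_def
      by (rule gasper[OF p A0 B0 c0 nz(3,4)]) (use Dk in \<open>auto simp: Dg_def\<close>)
    also have "Ng N = 0"
    proof -
      have "theta (c * q * q ^ (N - 1)) p = 0"
      proof -
        have "c * q * q ^ (N - 1) = c * q ^ N" using N1
          by (metis Suc_diff_1 less_le_trans mult.assoc power_Suc zero_less_one)
        also have "\<dots> = 1" using nz unfolding c_def by (simp add: power_int_minus field_simps)
        finally show ?thesis using theta_one[OF p] by simp
      qed
      hence "pp (c * q) q p N = 0" unfolding pp_def using N1
        by (auto simp: prod_zero_iff intro!: bexI[of _ "N - 1"])
      thus ?thesis unfolding Ng_def by simp
    qed
    finally show ?thesis using False by simp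
  qed
qed

end
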